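(* Let $\mathbb{D}$ be a division ring, let $m,n\ge 1$ be integers, and let $P$ be an $n\times m$ matrix over $\mathbb{D}$. If $V$ is an invertible $m\times m$ matrix over $\mathbb{D}$ and $W$ is an invertible $n\times n$ matrix over $\mathbb{D}$, then the rings $\mathfrak{M}(\mathbb{D}, m, n, P)$ and $\mathfrak{M}(\mathbb{D}, m, n, VPW)$ are isomorphic. Moreover, if $\mathbb{D}$ is a field, then $\mathfrak{M}(\mathbb{D}, m, n, P)$ and $\mathfrak{M}(\mathbb{D}, m, n, VPW)$ are isomorphic as $\mathbb{D}$-algebras.
   Context: For a division ring $\mathbb{D}$ and an $n\times m$ matrix $P$ over $\mathbb{D}$, $\mathfrak{M}(\mathbb{D}, m, n, P)$ denotes the set of all $m\times n$ matrices over $\mathbb{D}$ with entrywise addition and multiplication $A\bullet B = APB$ (usual matrix products on the right). When $\mathbb{D}$ is a field, scalar multiplication is entrywise, making it a $\mathbb{D}$-algebra. *)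

theory Defs
  imports "HOL-Analysis.Analysis"
begin

text \<open>The ring M(D,m,n,P): m x n matrices (type 'a^'n^'m) with entrywise addition
  and multiplication A \<bullet> B = A P B, where P is an n x m matrix (type 'a^'m^'n).\<close>
definition sandwich_mult :: "'a::semiring_1^'m^'n \<Rightarrow> 'a^'n^'m \<Rightarrow> 'a^'n^'m \<Rightarrow> 'a^'n^'m" where
  "sandwich_mult P A B = A ** P ** B"

definition mat_scale :: "'a::times \<Rightarrow> 'a^'n^'m \<Rightarrow> 'a^'n^'m" where
  "mat_scale c A = (\<chi> i j. c * A $ i $ j)"

definition sandwich_ring_iso ::
  "'a::semiring_1^'m^'n \<Rightarrow> 'a^'m^'n \<Rightarrow> ('a^'n^'m \<Rightarrow> 'a^'n^'m) \<Rightarrow> bool" where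
  "sandwich_ring_iso P Q f \<longleftrightarrow> bij f \<and> (\<forall>A B. f (A + B) = f A + f B)
     \<and> (\<forall>A B. f (sandwich_mult P A B) = sandwich_mult Q (f A) (f B))"

definition sandwich_alg_iso ::
  "'a::semiring_1^'m^'n \<Rightarrow> 'a^'m^'n \<Rightarrow> ('a^'n^'m \<Rightarrow> 'a^'n^'m) \<Rightarrow> bool" where
  "sandwich_alg_iso P Q f \<longleftrightarrow> sandwich_ring_iso P Q f
     \<and> (\<forall>c A. f (mat_scale c A) = mat_scale c (f A))"

end

theory Submission
  imports Defs
begin

lemma my_rdistrib: "((A::'a::semiring_1^'n^'m) + B) ** (C::'a^'p^'n) = A ** C + B ** C"
  by (vector matrix_matrix_mult_def sum.distrib[symmetric] distrib_right)

lemma my_scale_l: "(mat_scale c (A::'a::semiring_1^'n^'m)) ** (C::'a^'p^'n) = mat_scale c (A ** C)"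
  by (vector matrix_matrix_mult_def mat_scale_def sum_distrib_left mult.assoc)

lemma my_scale_r:
  assumes "\<forall>x y :: 'a. x * y = y * x"
  shows "(C::'a::semiring_1^'n^'m) ** (mat_scale c (A::'a^'p^'n)) = mat_scale c (C ** A)"
proof -
  have "\<And>x y z :: 'a. x * (y * z) = y * (x * z)"
    by (metis assms mult.assoc)
  then show ?thesis
    by (vector matrix_matrix_mult_def mat_scale_def sum_distrib_left)
qed

theorem lemma1p4:
  fixes P :: "'a::division_ring^'m^'n"
    and V :: "'a^'n^'n"
    and W :: "'a^'m^'m"
  assumes "invertible V" and "invertible W"
  shows "(\<exists>f. sandwich_ring_iso P (V ** P ** W) f)
    \<and> ((\<forall>x y :: 'a. x * y = y * x) \<longrightarrow> (\<exists>f. sandwich_alg_iso P (V ** P ** W) f))"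
proof -
  obtain V' where V1: "V ** V' = mat 1" and V2: "V' ** V = mat 1"
    using assms(1) unfolding invertible_def by blast
  obtain W' where W1: "W ** W' = mat 1" and W2: "W' ** W = mat 1"
    using assms(2) unfolding invertible_def by blast
  define f where "f = (\<lambda>A::'a^'n^'m. W' ** A ** V')"
  have bij: "bij f"
  proof (rule bij_betw_byWitness[where f' = "\<lambda>B. W ** B ** V"])
    show "\<forall>a\<in>UNIV. W ** f a ** V = a"
      by (simp add: f_def matrix_mul_assoc W1 V2)
         (metis V2 W1 matrix_mul_assoc matrix_mul_lid matrix_mul_rid)
    show "\<forall>a\<in>UNIV. f (W ** a ** V) = a"
      by (simp add: f_def) (metis V1 W2 matrix_mul_assoc matrix_mul_lid matrix_mul_rid)
  qed auto
  have add: "\<forall>A B. f (A + B) = f A + f B"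
    by (simp add: f_def matrix_add_ldistrib my_rdistrib)
  have mul: "\<forall>A B. f (sandwich_mult P A B) = sandwich_mult (V ** P ** W) (f A) (f B)"
  proof (intro allI)
    fix A B :: "'a^'n^'m"
    have "W' ** A ** V' ** (V ** P ** W) ** (W' ** B ** V')
        = W' ** A ** (V' ** V) ** P ** (W ** W') ** B ** V'"
      by (simp add: matrix_mul_assoc)
    also have "\<dots> = W' ** (A ** P ** B) ** V'"
      by (simp add: V2 W1 matrix_mul_assoc)
    finally show "f (sandwich_mult P A B) = sandwich_mult (V ** P ** W) (f A) (f B)"
      by (simp add: f_def sandwich_mult_def)
  qed
  have ring: "sandwich_ring_iso P (V ** P ** W) f"
    using bij add mul unfolding sandwich_ring_iso_def by blast
  moreover have "(\<forall>x y :: 'a. x * y = y * x) \<longrightarrow> sandwich_alg_iso P (V ** P ** W) f"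
  proof
    assume c: "\<forall>x y :: 'a. x * y = y * x"
    show "sandwich_alg_iso P (V ** P ** W) f"
      unfolding sandwich_alg_iso_def
      using ring by (simp add: f_def my_scale_l my_scale_r[OF c])
  qed
  ultimately show ?thesis by blast
qed

end
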